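(* Let $V$ be a quasi-regular mixed lattice vector space and let $\mathcal{R}(V)$ be the set of all regular quasi-ideals of $V$, ordered by inclusion. Then $\mathcal{R}(V)$ is a distributive lattice in which $A\vee B=A+B$ and $A\wedge B=A\cap B$. Moreover, $\mathcal{R}(V)$ has smallest element $\{0\}$ and largest element $V_{sp}-V_{sp}$.
   Context: A mixed lattice vector space is a real vector space $V$ with two partial orderings $\le$ (initial) and $\preceq$ (specific), each compatible with the vector space structure, such that for all $x,y$ the mixed lower envelope $x\curlywedge y=\max\{w: w\preceq x,\ w\le y\}$ and mixed upper envelope $x\curlyvee y=\min\{w: x\preceq w,\ y\le w\}$ exist (max/min with respect to $\le$). $V_{sp}=\{x:0\preceq x\}$, $E_{sp}=E\cap V_{sp}$. $V$ is quasi-regular if $V_{sp}$ is closed under $\curlywedge,\curlyvee$. A mixed lattice subspace is a linear subspace closed under $\curlywedge,\curlyvee$. A subspace $S$ is regular if $S=S_{sp}-S_{sp}$. A quasi-ideal is a mixed lattice subspace $A$ such that $y\in A$ and $0\preceq x\le y$ imply $x\in A$. *)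

theory Defs
  imports Main "HOL.Real_Vector_Spaces"
begin

text \<open>Orders are given as relations on a real vector space: le is the initial order,
  sle the specific order.\<close>

definition partial_order_rel :: "('a \<Rightarrow> 'a \<Rightarrow> bool) \<Rightarrow> bool" where
  "partial_order_rel r \<longleftrightarrow> (\<forall>x. r x x) \<and> (\<forall>x y. r x y \<and> r y x \<longrightarrow> x = y)
     \<and> (\<forall>x y z. r x y \<and> r y z \<longrightarrow> r x z)"

definition vs_compatible :: "('a::real_vector \<Rightarrow> 'a \<Rightarrow> bool) \<Rightarrow> bool" where
  "vs_compatible r \<longleftrightarrow> (\<forall>x y z. r x y \<longrightarrow> r (x + z) (y + z))
     \<and> (\<forall>x y (c::real). r x y \<and> 0 \<le> c \<longrightarrow> r (c *\<^sub>R x) (c *\<^sub>R y))"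

definition mlow_set :: "('a \<Rightarrow> 'a \<Rightarrow> bool) \<Rightarrow> ('a \<Rightarrow> 'a \<Rightarrow> bool) \<Rightarrow> 'a \<Rightarrow> 'a \<Rightarrow> 'a set" where
  "mlow_set le sle x y = {w. sle w x \<and> le w y}"

definition mup_set :: "('a \<Rightarrow> 'a \<Rightarrow> bool) \<Rightarrow> ('a \<Rightarrow> 'a \<Rightarrow> bool) \<Rightarrow> 'a \<Rightarrow> 'a \<Rightarrow> 'a set" where
  "mup_set le sle x y = {w. sle x w \<and> le y w}"

definition mlow :: "('a \<Rightarrow> 'a \<Rightarrow> bool) \<Rightarrow> ('a \<Rightarrow> 'a \<Rightarrow> bool) \<Rightarrow> 'a \<Rightarrow> 'a \<Rightarrow> 'a" where
  "mlow le sle x y = (THE w. w \<in> mlow_set le sle x y \<and> (\<forall>v \<in> mlow_set le sle x y. le v w))"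

definition mup :: "('a \<Rightarrow> 'a \<Rightarrow> bool) \<Rightarrow> ('a \<Rightarrow> 'a \<Rightarrow> bool) \<Rightarrow> 'a \<Rightarrow> 'a \<Rightarrow> 'a" where
  "mup le sle x y = (THE w. w \<in> mup_set le sle x y \<and> (\<forall>v \<in> mup_set le sle x y. le w v))"

definition mixed_lattice_vs :: "('a::real_vector \<Rightarrow> 'a \<Rightarrow> bool) \<Rightarrow> ('a \<Rightarrow> 'a \<Rightarrow> bool) \<Rightarrow> bool" where
  "mixed_lattice_vs le sle \<longleftrightarrow>
     partial_order_rel le \<and> partial_order_rel sle \<and> vs_compatible le \<and> vs_compatible sle
     \<and> (\<forall>x y. \<exists>w. w \<in> mlow_set le sle x y \<and> (\<forall>v \<in> mlow_set le sle x y. le v w))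
     \<and> (\<forall>x y. \<exists>w. w \<in> mup_set le sle x y \<and> (\<forall>v \<in> mup_set le sle x y. le w v))"

definition Vsp :: "('a::real_vector \<Rightarrow> 'a \<Rightarrow> bool) \<Rightarrow> 'a set" where
  "Vsp sle = {x. sle 0 x}"

definition quasi_regular :: "('a::real_vector \<Rightarrow> 'a \<Rightarrow> bool) \<Rightarrow> ('a \<Rightarrow> 'a \<Rightarrow> bool) \<Rightarrow> bool" where
  "quasi_regular le sle \<longleftrightarrow>
     (\<forall>x \<in> Vsp sle. \<forall>y \<in> Vsp sle. mlow le sle x y \<in> Vsp sle \<and> mup le sle x y \<in> Vsp sle)"

definition set_sum :: "'a::plus set \<Rightarrow> 'a set \<Rightarrow> 'a set" where
  "set_sum A B = {a + b | a b. a \<in> A \<and> b \<in> B}"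

definition set_diff :: "'a::minus set \<Rightarrow> 'a set \<Rightarrow> 'a set" where
  "set_diff A B = {a - b | a b. a \<in> A \<and> b \<in> B}"

definition mixed_lattice_subspace :: "('a::real_vector \<Rightarrow> 'a \<Rightarrow> bool) \<Rightarrow> ('a \<Rightarrow> 'a \<Rightarrow> bool) \<Rightarrow> 'a set \<Rightarrow> bool" where
  "mixed_lattice_subspace le sle S \<longleftrightarrow> subspace S
     \<and> (\<forall>x \<in> S. \<forall>y \<in> S. mlow le sle x y \<in> S \<and> mup le sle x y \<in> S)"

definition regular_subspace :: "('a::real_vector \<Rightarrow> 'a \<Rightarrow> bool) \<Rightarrow> 'a set \<Rightarrow> bool" where
  "regular_subspace sle S \<longleftrightarrow> S = set_diff (S \<inter> Vsp sle) (S \<inter> Vsp sle)"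

definition quasi_ideal :: "('a::real_vector \<Rightarrow> 'a \<Rightarrow> bool) \<Rightarrow> ('a \<Rightarrow> 'a \<Rightarrow> bool) \<Rightarrow> 'a set \<Rightarrow> bool" where
  "quasi_ideal le sle A \<longleftrightarrow> mixed_lattice_subspace le sle A
     \<and> (\<forall>x y. y \<in> A \<and> sle 0 x \<and> le x y \<longrightarrow> x \<in> A)"

definition regular_quasi_ideals :: "('a::real_vector \<Rightarrow> 'a \<Rightarrow> bool) \<Rightarrow> ('a \<Rightarrow> 'a \<Rightarrow> bool) \<Rightarrow> 'a set set" where
  "regular_quasi_ideals le sle = {A. quasi_ideal le sle A \<and> regular_subspace sle A}"

end

theory Submission
  imports Defs
begin

locale mls =
  fixes le sle :: "'a::real_vector \<Rightarrow> 'a \<Rightarrow> bool"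
  assumes mlvs: "mixed_lattice_vs le sle"
    and qr: "quasi_regular le sle"
begin

abbreviation "lo \<equiv> mlow le sle"
abbreviation "up \<equiv> mup le sle"
abbreviation "Sp \<equiv> Vsp sle"

lemma le_refl: "le x x"
  using mlvs unfolding mixed_lattice_vs_def partial_order_rel_def by blast
lemma le_antisym: "le x y \<Longrightarrow> le y x \<Longrightarrow> x = y"
  using mlvs unfolding mixed_lattice_vs_def partial_order_rel_def by blast
lemma le_trans: "le x y \<Longrightarrow> le y z \<Longrightarrow> le x z"
  using mlvs unfolding mixed_lattice_vs_def partial_order_rel_def by blast
lemma sle_refl: "sle x x"
  using mlvs unfolding mixed_lattice_vs_def partial_order_rel_def by blast
lemma sle_antisym: "sle x y \<Longrightarrow> sle y x \<Longrightarrow> x = y"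
  using mlvs unfolding mixed_lattice_vs_def partial_order_rel_def by blast
lemma sle_trans: "sle x y \<Longrightarrow> sle y z \<Longrightarrow> sle x z"
  using mlvs unfolding mixed_lattice_vs_def partial_order_rel_def by blast

lemma le_add: "le x y \<Longrightarrow> le (x + z) (y + z)"
  using mlvs unfolding mixed_lattice_vs_def vs_compatible_def by blast
lemma sle_add: "sle x y \<Longrightarrow> sle (x + z) (y + z)"
  using mlvs unfolding mixed_lattice_vs_def vs_compatible_def by blast
lemma sle_scale: "sle x y \<Longrightarrow> 0 \<le> c \<Longrightarrow> sle (c *\<^sub>R x) (c *\<^sub>R y)"
  using mlvs unfolding mixed_lattice_vs_def vs_compatible_def by blast

lemma le_shift: "le (x + z) (y + z) \<longleftrightarrow> le x y"
proof
  assume "le (x + z) (y + z)"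
  from le_add[OF this, of "-z"] show "le x y" by simp
qed (rule le_add)

lemma sle_shift: "sle (x + z) (y + z) \<longleftrightarrow> sle x y"
proof
  assume "sle (x + z) (y + z)"
  from sle_add[OF this, of "-z"] show "sle x y" by simp
qed (rule sle_add)

lemma le_diff: "le x y \<longleftrightarrow> le 0 (y - x)"
  using le_shift[of x "-x" y] by simp
lemma sle_diff: "sle x y \<longleftrightarrow> sle 0 (y - x)"
  using sle_shift[of x "-x" y] by simp

lemma mlow_unique:
  assumes "m \<in> mlow_set le sle x y" "\<forall>v \<in> mlow_set le sle x y. le v m"
  shows "lo x y = m"
  unfolding mlow_def
  apply (rule the_equality)
  using assms le_antisym by blast+

lemma mlow_prop: "lo x y \<in> mlow_set le sle x y \<and> (\<forall>v \<in> mlow_set le sle x y. le v (lo x y))"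
proof -
  obtain w where "w \<in> mlow_set le sle x y \<and> (\<forall>v \<in> mlow_set le sle x y. le v w)"
    using mlvs unfolding mixed_lattice_vs_def by blast
  then show ?thesis using mlow_unique by metis
qed

lemma mlow_s: "sle (lo x y) x" and mlow_l: "le (lo x y) y"
  using mlow_prop[of x y] unfolding mlow_set_def by auto

lemma mlow_max: "sle v x \<Longrightarrow> le v y \<Longrightarrow> le v (lo x y)"
  using mlow_prop[of x y] unfolding mlow_set_def by auto

lemma mup_unique:
  assumes "m \<in> mup_set le sle x y" "\<forall>v \<in> mup_set le sle x y. le m v"
  shows "up x y = m"
  unfolding mup_def
  apply (rule the_equality)
  using assms le_antisym by blast+

lemma mup_prop: "up x y \<in> mup_set le sle x y \<and> (\<forall>v \<in> mup_set le sle x y. le (up x y) v)"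
proof -
  obtain w where "w \<in> mup_set le sle x y \<and> (\<forall>v \<in> mup_set le sle x y. le w v)"
    using mlvs unfolding mixed_lattice_vs_def by blast
  then show ?thesis using mup_unique by metis
qed

lemma mup_s: "sle x (up x y)" and mup_l: "le y (up x y)"
  using mup_prop[of x y] unfolding mup_set_def by auto

lemma mup_min: "sle x v \<Longrightarrow> le y v \<Longrightarrow> le (up x y) v"
  using mup_prop[of x y] unfolding mup_set_def by auto

lemma qr_lo: "x \<in> Sp \<Longrightarrow> y \<in> Sp \<Longrightarrow> lo x y \<in> Sp"
  using qr unfolding quasi_regular_def by blast
lemma qr_up: "x \<in> Sp \<Longrightarrow> y \<in> Sp \<Longrightarrow> up x y \<in> Sp"
  using qr unfolding quasi_regular_def by blast

lemma Sp_iff: "x \<in> Sp \<longleftrightarrow> sle 0 x"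
  unfolding Vsp_def by simp

lemma sle_le0: assumes "sle 0 e" shows "le 0 e"
proof -
  have "lo 0 e \<in> Sp" using qr_lo assms sle_refl Sp_iff by blast
  then have "lo 0 e = 0" using mlow_s[of 0 e] sle_antisym Sp_iff by blast
  then show ?thesis using mlow_l[of 0 e] by simp
qed

lemma sle_le: "sle x y \<Longrightarrow> le x y"
  using sle_le0 sle_diff le_diff by blast

lemma Sp_add: "a \<in> Sp \<Longrightarrow> b \<in> Sp \<Longrightarrow> a + b \<in> Sp"
  unfolding Sp_iff using sle_add[of 0 b a] sle_trans by (simp add: add.commute)

lemma mlow_shift: "lo (x + c) (y + c) = lo x y + c"
proof (rule mlow_unique)
  show "lo x y + c \<in> mlow_set le sle (x + c) (y + c)"
    unfolding mlow_set_def using mlow_s mlow_l sle_shift le_shift by blast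
  show "\<forall>v\<in>mlow_set le sle (x + c) (y + c). le v (lo x y + c)"
  proof
    fix v assume "v \<in> mlow_set le sle (x + c) (y + c)"
    then have "sle (v - c + c) (x + c)" "le (v - c + c) (y + c)" unfolding mlow_set_def by auto
    then have "le (v - c) (lo x y)" using mlow_max sle_shift le_shift by blast
    then show "le v (lo x y + c)" using le_shift[of "v - c" c] by simp
  qed
qed

lemma mup_shift: "up (x + c) (y + c) = up x y + c"
proof (rule mup_unique)
  show "up x y + c \<in> mup_set le sle (x + c) (y + c)"
    unfolding mup_set_def using mup_s mup_l sle_shift le_shift by blast
  show "\<forall>v\<in>mup_set le sle (x + c) (y + c). le (up x y + c) v"
  proof
    fix v assume "v \<in> mup_set le sle (x + c) (y + c)"
    then have "sle (x + c) (v - c + c)" "le (y + c) (v - c + c)" unfolding mup_set_def by auto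
    then have "le (up x y) (v - c)" using mup_min sle_shift le_shift by blast
    then show "le (up x y + c) v" using le_shift[of _ c "v - c"] by simp
  qed
qed

definition ideal_prop :: "'a set \<Rightarrow> bool" where
  "ideal_prop A \<longleftrightarrow> (\<forall>x y. y \<in> A \<and> sle 0 x \<and> le x y \<longrightarrow> x \<in> A)"

lemma L1:
  assumes sub: "subspace A" and reg: "A \<subseteq> set_diff (A \<inter> Sp) (A \<inter> Sp)" and id: "ideal_prop A"
  shows "quasi_ideal le sle A"
  unfolding quasi_ideal_def mixed_lattice_subspace_def
proof (intro conjI ballI)
  show "subspace A" by fact
  show "\<forall>x y. y \<in> A \<and> sle 0 x \<and> le x y \<longrightarrow> x \<in> A" using id unfolding ideal_prop_def by blast
  fix x y assume x: "x \<in> A" and y: "y \<in> A"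
  obtain x1 x2 where xx: "x = x1 - x2" "x1 \<in> A \<inter> Sp" "x2 \<in> A \<inter> Sp"
    using reg x unfolding set_diff_def by blast
  obtain y1 y2 where yy: "y = y1 - y2" "y1 \<in> A \<inter> Sp" "y2 \<in> A \<inter> Sp"
    using reg y unfolding set_diff_def by blast
  define c where "c = x2 + y2"
  have c: "c \<in> A" using xx yy sub subspace_add c_def by blast
  have xc: "x + c \<in> A \<inter> Sp" using xx yy Sp_add sub subspace_add unfolding c_def
    by (metis IntD1 IntD2 IntI add.commute diff_add_cancel add.assoc)
  have yc: "y + c \<in> A \<inter> Sp" using xx yy Sp_add sub subspace_add unfolding c_def
    by (metis IntD1 IntD2 IntI diff_add_cancel add.assoc add.commute add.left_commute)
  have m1: "lo (x + c) (y + c) \<in> A"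
    using id unfolding ideal_prop_def using qr_lo[of "x + c" "y + c"] xc yc mlow_l Sp_iff by blast
  then show "lo x y \<in> A" using mlow_shift[of x c y] c sub subspace_diff
    by (metis add_diff_cancel)
  have "le (up (x + c) (y + c)) ((x + c) + (y + c))"
  proof (rule mup_min)
    show "sle (x + c) (x + c + (y + c))" using yc sle_shift[of 0 "x + c" "y + c"] Sp_iff
      by (simp add: add.commute)
    show "le (y + c) (x + c + (y + c))" using xc sle_le0 le_shift[of 0 "y + c" "x + c"] Sp_iff
      by (simp add: add.commute)
  qed
  then have m2: "up (x + c) (y + c) \<in> A"
    using id unfolding ideal_prop_def using qr_up[of "x + c" "y + c"] xc yc Sp_iff sub subspace_add
    by blast
  then show "up x y \<in> A" using mup_shift[of x c y] c sub subspace_diff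
    by (metis add_diff_cancel)
qed


lemma decomp:
  assumes u: "u \<in> Sp" and b: "b1 \<in> Sp" and c: "c1 \<in> Sp" and le: "le u (b1 + c1)"
  shows "lo u b1 \<in> Sp \<and> le (lo u b1) b1 \<and> le (lo u b1) u \<and> u - lo u b1 \<in> Sp
     \<and> le (u - lo u b1) c1 \<and> le (u - lo u b1) u"
proof -
  define p where "p = lo u b1"
  have p1: "p \<in> Sp" using qr_lo u b p_def by blast
  have p2: "le p b1" using mlow_l p_def by blast
  have p3: "le p u" using mlow_s sle_le p_def by blast
  have q1: "u - p \<in> Sp" using mlow_s[of u b1] sle_diff Sp_iff p_def by blast
  have "sle (0 + (u - c1)) (c1 + (u - c1))" using c Sp_iff sle_shift by blast
  then have s1: "sle (u - c1) u" by simp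
  have "le (u + - c1) (b1 + c1 + - c1)" using le le_shift by blast
  then have s2: "le (u - c1) b1" by simp
  have "le (u - c1) p" using mlow_max[OF s1 s2] p_def by simp
  moreover have "p - (u - c1) = c1 - (u - p)" by (simp add: algebra_simps)
  ultimately have q2: "le (u - p) c1" using le_diff by metis
  have "le 0 p" using p1 Sp_iff sle_le0 by blast
  then have q3: "le (u - p) u" using le_diff[of "u - p" u] by simp
  show ?thesis using p1 p2 p3 q1 q2 q3 p_def by simp
qed

lemma REG:
  assumes "subspace S" "S \<subseteq> set_diff (S \<inter> Sp) (S \<inter> Sp)"
  shows "regular_subspace sle S"
  unfolding regular_subspace_def
proof
  show "set_diff (S \<inter> Sp) (S \<inter> Sp) \<subseteq> S"
    unfolding set_diff_def using assms(1) subspace_diff by blast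
qed (use assms in auto)

abbreviation "RR \<equiv> regular_quasi_ideals le sle"

lemma RR_sub: "A \<in> RR \<Longrightarrow> subspace A"
  unfolding regular_quasi_ideals_def quasi_ideal_def mixed_lattice_subspace_def by blast
lemma RR_id: "A \<in> RR \<Longrightarrow> ideal_prop A"
  unfolding regular_quasi_ideals_def quasi_ideal_def ideal_prop_def by blast
lemma RR_reg: "A \<in> RR \<Longrightarrow> A = set_diff (A \<inter> Sp) (A \<inter> Sp)"
  unfolding regular_quasi_ideals_def regular_subspace_def by blast
lemma RR_dec:
  assumes "A \<in> RR" "x \<in> A"
  shows "\<exists>a b. x = a - b \<and> a \<in> A \<inter> Sp \<and> b \<in> A \<inter> Sp"
proof -
  have eq: "set_diff (A \<inter> Sp) (A \<inter> Sp) = A" using RR_reg[OF assms(1)] by (rule sym)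
  have "x \<in> set_diff (A \<inter> Sp) (A \<inter> Sp)" unfolding eq by (rule assms(2))
  then show ?thesis unfolding set_diff_def by blast
qed

lemma RR_I: "subspace A \<Longrightarrow> A \<subseteq> set_diff (A \<inter> Sp) (A \<inter> Sp) \<Longrightarrow> ideal_prop A \<Longrightarrow> A \<in> RR"
  unfolding regular_quasi_ideals_def using L1 REG by blast

lemma idI: "ideal_prop A \<Longrightarrow> y \<in> A \<Longrightarrow> sle 0 x \<Longrightarrow> le x y \<Longrightarrow> x \<in> A"
  unfolding ideal_prop_def by blast

lemma sum_RR:
  assumes A: "A \<in> RR" and B: "B \<in> RR"
  shows "set_sum A B \<in> RR"
proof (rule RR_I)
  show sub: "subspace (set_sum A B)" unfolding set_sum_def
    using subspace_sums RR_sub A B by blast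
  show "set_sum A B \<subseteq> set_diff (set_sum A B \<inter> Sp) (set_sum A B \<inter> Sp)"
  proof
    fix y assume "y \<in> set_sum A B"
    then obtain a b where y: "y = a + b" "a \<in> A" "b \<in> B" unfolding set_sum_def by blast
    obtain a1 a2 where a: "a = a1 - a2" "a1 \<in> A \<inter> Sp" "a2 \<in> A \<inter> Sp"
      using RR_dec[OF A y(2)] by blast
    obtain b1 b2 where b: "b = b1 - b2" "b1 \<in> B \<inter> Sp" "b2 \<in> B \<inter> Sp"
      using RR_dec[OF B y(3)] by blast
    have "a1 + b1 \<in> set_sum A B" "a2 + b2 \<in> set_sum A B"
      using a b unfolding set_sum_def by blast+
    moreover have "a1 + b1 \<in> Sp" "a2 + b2 \<in> Sp" using a b Sp_add by blast+
    moreover have "y = (a1 + b1) - (a2 + b2)" using y a b by simp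
    ultimately show "y \<in> set_diff (set_sum A B \<inter> Sp) (set_sum A B \<inter> Sp)"
      unfolding set_diff_def by blast
  qed
  show "ideal_prop (set_sum A B)" unfolding ideal_prop_def
  proof (intro allI impI)
    fix x y assume h: "y \<in> set_sum A B \<and> sle 0 x \<and> le x y"
    then obtain a b where y: "y = a + b" "a \<in> A" "b \<in> B" unfolding set_sum_def by blast
    obtain a1 a2 where a: "a = a1 - a2" "a1 \<in> A \<inter> Sp" "a2 \<in> A \<inter> Sp"
      using RR_dec[OF A y(2)] by blast
    obtain b1 b2 where b: "b = b1 - b2" "b1 \<in> B \<inter> Sp" "b2 \<in> B \<inter> Sp"
      using RR_dec[OF B y(3)] by blast
    have "le 0 (a2 + b2)" using a b Sp_add Sp_iff sle_le0 by blast
    moreover have "a1 + b1 - y = a2 + b2" using y a b by simp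
    ultimately have "le y (a1 + b1)" using le_diff[of y "a1 + b1"] by simp
    then have xle: "le x (a1 + b1)" using h le_trans by blast
    have x: "x \<in> Sp" using h Sp_iff by blast
    note d = decomp[OF x IntD2[OF a(2)] IntD2[OF b(2)] xle]
    have "lo x a1 \<in> A"
      by (rule idI[OF RR_id[OF A] IntD1[OF a(2)]]) (use d Sp_iff in auto)
    moreover have "x - lo x a1 \<in> B"
      by (rule idI[OF RR_id[OF B] IntD1[OF b(2)]]) (use d Sp_iff in auto)
    moreover have "x = lo x a1 + (x - lo x a1)" by simp
    ultimately show "x \<in> set_sum A B" unfolding set_sum_def by (intro CollectI exI[of _ "lo x a1"] exI[of _ "x - lo x a1"]) blast
  qed
qed

lemma inter_RR:
  assumes A: "A \<in> RR" and B: "B \<in> RR"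
  shows "A \<inter> B \<in> RR"
proof (rule RR_I)
  show "subspace (A \<inter> B)" using subspace_inter RR_sub A B by blast
  show "ideal_prop (A \<inter> B)" using RR_id A B unfolding ideal_prop_def by blast
  show "A \<inter> B \<subseteq> set_diff (A \<inter> B \<inter> Sp) (A \<inter> B \<inter> Sp)"
  proof
    fix x assume x: "x \<in> A \<inter> B"
    obtain a1 a2 where a: "x = a1 - a2" "a1 \<in> A \<inter> Sp" "a2 \<in> A \<inter> Sp"
      using RR_dec[OF A IntD1[OF x]] by blast
    obtain b1 b2 where b: "x = b1 - b2" "b1 \<in> B \<inter> Sp" "b2 \<in> B \<inter> Sp"
      using RR_dec[OF B IntD2[OF x]] by blast
    have "a1 + - x = a2" unfolding a(1) by simp
    moreover have "b1 + - x = b2" unfolding b(1) by simp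
    ultimately have "lo a2 b2 = lo (a1 + - x) (b1 + - x)" by simp
    also have "\<dots> = lo a1 b1 - x" using mlow_shift[of a1 "- x" b1] by simp
    finally have e: "x = lo a1 b1 - lo a2 b2" by simp
    have u: "lo a1 b1 \<in> A \<inter> B \<inter> Sp"
    proof -
      have s: "lo a1 b1 \<in> Sp" using qr_lo a b by blast
      have "lo a1 b1 \<in> A" using idI[OF RR_id[OF A]] a s Sp_iff mlow_s sle_le by blast
      moreover have "lo a1 b1 \<in> B" using idI[OF RR_id[OF B]] b s Sp_iff mlow_l by blast
      ultimately show ?thesis using s by blast
    qed
    have v: "lo a2 b2 \<in> A \<inter> B \<inter> Sp"
    proof -
      have s: "lo a2 b2 \<in> Sp" using qr_lo a b by blast
      have "lo a2 b2 \<in> A" using idI[OF RR_id[OF A]] a s Sp_iff mlow_s sle_le by blast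
      moreover have "lo a2 b2 \<in> B" using idI[OF RR_id[OF B]] b s Sp_iff mlow_l by blast
      ultimately show ?thesis using s by blast
    qed
    show "x \<in> set_diff (A \<inter> B \<inter> Sp) (A \<inter> B \<inter> Sp)"
      unfolding set_diff_def using e u v by blast
  qed
qed

lemma distrib_pos:
  assumes A: "A \<in> RR" and B: "B \<in> RR" and C: "C \<in> RR"
    and u: "u \<in> Sp" "u \<in> A" "u \<in> set_sum B C"
  shows "u \<in> set_sum (A \<inter> B) (A \<inter> C)"
proof -
  obtain b c where y: "u = b + c" "b \<in> B" "c \<in> C" using u unfolding set_sum_def by blast
  obtain b1 b2 where b: "b = b1 - b2" "b1 \<in> B \<inter> Sp" "b2 \<in> B \<inter> Sp"
    using RR_dec[OF B y(2)] by blast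
  obtain c1 c2 where c: "c = c1 - c2" "c1 \<in> C \<inter> Sp" "c2 \<in> C \<inter> Sp"
    using RR_dec[OF C y(3)] by blast
  have "le 0 (b2 + c2)" using c b Sp_add Sp_iff sle_le0 by blast
  moreover have "b1 + c1 - u = b2 + c2" using y c b by simp
  ultimately have xle: "le u (b1 + c1)" using le_diff[of u "b1 + c1"] by simp
  note d = decomp[OF u(1) IntD2[OF b(2)] IntD2[OF c(2)] xle]
  have "lo u b1 \<in> A"
    by (rule idI[OF RR_id[OF A] u(2)]) (use d Sp_iff in auto)
  moreover have "lo u b1 \<in> B"
    by (rule idI[OF RR_id[OF B] IntD1[OF b(2)]]) (use d Sp_iff in auto)
  moreover have "u - lo u b1 \<in> A"
    by (rule idI[OF RR_id[OF A] u(2)]) (use d Sp_iff in auto)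
  moreover have "u - lo u b1 \<in> C"
    by (rule idI[OF RR_id[OF C] IntD1[OF c(2)]]) (use d Sp_iff in auto)
  moreover have "u = lo u b1 + (u - lo u b1)" by simp
  ultimately show ?thesis unfolding set_sum_def by (intro CollectI exI[of _ "lo u b1"] exI[of _ "u - lo u b1"]) blast
qed

lemma distrib:
  assumes A: "A \<in> RR" and B: "B \<in> RR" and C: "C \<in> RR"
  shows "A \<inter> set_sum B C = set_sum (A \<inter> B) (A \<inter> C)"
proof
  have sA: "subspace A" using RR_sub A by blast
  have sBC: "subspace (set_sum (A \<inter> B) (A \<inter> C))" unfolding set_sum_def
    using subspace_sums subspace_inter RR_sub A B C by blast
  show "set_sum (A \<inter> B) (A \<inter> C) \<subseteq> A \<inter> set_sum B C"
  proof
    fix x assume "x \<in> set_sum (A \<inter> B) (A \<inter> C)"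
    then obtain b c where "x = b + c" "b \<in> A \<inter> B" "c \<in> A \<inter> C" unfolding set_sum_def by blast
    then show "x \<in> A \<inter> set_sum B C" unfolding set_sum_def using sA subspace_add by blast
  qed
  show "A \<inter> set_sum B C \<subseteq> set_sum (A \<inter> B) (A \<inter> C)"
  proof
    fix x assume x: "x \<in> A \<inter> set_sum B C"
    have R: "A \<inter> set_sum B C \<in> RR" using inter_RR sum_RR A B C by blast
    obtain u v where uv: "x = u - v" "u \<in> A \<inter> set_sum B C \<inter> Sp" "v \<in> A \<inter> set_sum B C \<inter> Sp"
      using RR_dec[OF R x] by blast
    have "u \<in> set_sum (A \<inter> B) (A \<inter> C)" using uv(2) by (intro distrib_pos[OF A B C]) auto
    moreover have "v \<in> set_sum (A \<inter> B) (A \<inter> C)" using uv(3) by (intro distrib_pos[OF A B C]) auto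
    ultimately show "x \<in> set_sum (A \<inter> B) (A \<inter> C)" unfolding uv(1) by (rule subspace_diff[OF sBC])
  qed
qed

lemma zero_RR: "{0} \<in> RR"
proof (rule RR_I)
  show "subspace {0}" by simp
  show "{0} \<subseteq> set_diff ({0} \<inter> Sp) ({0} \<inter> Sp)"
    unfolding set_diff_def using sle_refl Sp_iff by force
  show "ideal_prop {0}" unfolding ideal_prop_def using sle_le0 le_antisym by blast
qed

lemma top_RR: "set_diff Sp Sp \<in> RR"
proof -
  have SpW: "Sp \<subseteq> set_diff Sp Sp" unfolding set_diff_def using sle_refl Sp_iff
    by (metis (mono_tags, lifting) diff_zero mem_Collect_eq subsetI)
  have sub: "subspace (set_diff Sp Sp)"
    unfolding subspace_def
  proof (intro conjI ballI allI)
    show "0 \<in> set_diff Sp Sp" using SpW sle_refl Sp_iff by blast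
    fix x y assume x: "x \<in> set_diff Sp Sp" and y: "y \<in> set_diff Sp Sp"
    then obtain x1 x2 y1 y2 where "x = x1 - x2" "y = y1 - y2" "x1 \<in> Sp" "x2 \<in> Sp" "y1 \<in> Sp" "y2 \<in> Sp"
      unfolding set_diff_def by blast
    moreover have "x + y = (x1 + y1) - (x2 + y2)" using calculation by simp
    ultimately show "x + y \<in> set_diff Sp Sp" unfolding set_diff_def using Sp_add by blast
  next
    fix c :: real and x assume x: "x \<in> set_diff Sp Sp"
    then obtain x1 x2 where h: "x = x1 - x2" "x1 \<in> Sp" "x2 \<in> Sp"
      unfolding set_diff_def by blast
    have sc: "d *\<^sub>R z \<in> Sp" if "z \<in> Sp" "0 \<le> d" for z and d :: real
      using sle_scale[of 0 z d] that Sp_iff by simp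
    show "c *\<^sub>R x \<in> set_diff Sp Sp"
    proof (cases "0 \<le> c")
      case True
      then show ?thesis using h sc unfolding set_diff_def
        by (metis (mono_tags, lifting) mem_Collect_eq scale_right_diff_distrib)
    next
      case False
      then have "0 \<le> - c" by simp
      moreover have "c *\<^sub>R x = (- c) *\<^sub>R x2 - (- c) *\<^sub>R x1" unfolding h(1) by (simp add: algebra_simps)
      ultimately show ?thesis using h sc unfolding set_diff_def by blast
    qed
  qed
  show ?thesis
  proof (rule RR_I)
    show "subspace (set_diff Sp Sp)" by fact
    show "set_diff Sp Sp \<subseteq> set_diff (set_diff Sp Sp \<inter> Sp) (set_diff Sp Sp \<inter> Sp)"
    proof -
      have "set_diff Sp Sp \<inter> Sp = Sp" using SpW by blast
      then show ?thesis by simp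
    qed
    show "ideal_prop (set_diff Sp Sp)" unfolding ideal_prop_def
    proof (intro allI impI)
      fix x y assume "y \<in> set_diff Sp Sp \<and> sle 0 x \<and> le x y"
      then have "x \<in> Sp" unfolding Sp_iff by blast
      then show "x \<in> set_diff Sp Sp" using SpW by blast
    qed
  qed
qed

lemma top_max: assumes "A \<in> RR" shows "A \<subseteq> set_diff Sp Sp"
proof -
  have "set_diff (A \<inter> Sp) (A \<inter> Sp) \<subseteq> set_diff Sp Sp" unfolding set_diff_def by blast
  with RR_reg[OF assms] show ?thesis by (rule ord_eq_le_trans)
qed
end

theorem theorem4p18:
  fixes le sle :: "'a::real_vector \<Rightarrow> 'a \<Rightarrow> bool"
  assumes "mixed_lattice_vs le sle"
    and "quasi_regular le sle"
  defines "R \<equiv> regular_quasi_ideals le sle"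
  shows "(\<forall>A \<in> R. \<forall>B \<in> R.
            set_sum A B \<in> R \<and> A \<subseteq> set_sum A B \<and> B \<subseteq> set_sum A B
            \<and> (\<forall>C \<in> R. A \<subseteq> C \<and> B \<subseteq> C \<longrightarrow> set_sum A B \<subseteq> C))
     \<and> (\<forall>A \<in> R. \<forall>B \<in> R.
            A \<inter> B \<in> R \<and> A \<inter> B \<subseteq> A \<and> A \<inter> B \<subseteq> B
            \<and> (\<forall>C \<in> R. C \<subseteq> A \<and> C \<subseteq> B \<longrightarrow> C \<subseteq> A \<inter> B))
     \<and> (\<forall>A \<in> R. \<forall>B \<in> R. \<forall>C \<in> R. A \<inter> set_sum B C = set_sum (A \<inter> B) (A \<inter> C))
     \<and> {0} \<in> R \<and> (\<forall>A \<in> R. {0} \<subseteq> A)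
     \<and> set_diff (Vsp sle) (Vsp sle) \<in> R \<and> (\<forall>A \<in> R. A \<subseteq> set_diff (Vsp sle) (Vsp sle))"
proof -
  interpret M: mls le sle using assms(1,2) by unfold_locales
  have RR: "R = M.RR" using R_def by simp
  have incl: "A \<subseteq> set_sum A B \<and> B \<subseteq> set_sum A B" if "A \<in> M.RR" "B \<in> M.RR" for A B
  proof -
    have "0 \<in> A" "0 \<in> B" using M.RR_sub subspace_0 that by blast+
    then show ?thesis unfolding set_sum_def by force
  qed
  have lub: "set_sum A B \<subseteq> C" if hC: "C \<in> M.RR" "A \<subseteq> C" "B \<subseteq> C" for A B C
  proof
    fix x assume "x \<in> set_sum A B"
    then obtain a b where "x = a + b" "a \<in> C" "b \<in> C" using hC unfolding set_sum_def by blast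
    then show "x \<in> C" using M.RR_sub[OF hC(1)] subspace_add by blast
  qed
  have z: "{0} \<subseteq> A" if "A \<in> M.RR" for A
    using M.RR_sub subspace_0 that by blast
  show ?thesis
    unfolding RR
    apply (intro conjI ballI impI)
    subgoal by (rule M.sum_RR)
    subgoal using incl by blast
    subgoal using incl by blast
    subgoal using lub by blast
    subgoal by (rule M.inter_RR)
    subgoal by blast
    subgoal by blast
    subgoal by blast
    subgoal by (rule M.distrib)
    subgoal by (rule M.zero_RR)
    subgoal by (rule z)
    subgoal by (rule M.top_RR)
    subgoal by (rule M.top_max)
    done
qed

end
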